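(* For every integer $k\ge0$ there exist symmetric polynomials $\phi_i^k(y_1,\dots,y_i)$ for $1\le i\le k+2$ and symmetric polynomials $\varphi_j^k(y_1,\dots,y_j)$ for $2\le j\le k+2$ such that $$\phi_1^k=1,\quad\phi_{k+1}^k=1,\quad\phi_{k+2}^k=0,\qquad \varphi_2^k(y_1,y_2)=\sum_{i=0}^ky_1^iy_2^{k-i},\quad\varphi_{k+2}^k=1,$$ and for every $1\le i\le k+1$, $$\phi_i^k(y_1,\dots,y_i)\,y_{i+1}^{k+2-i}-\varphi_{i+1}^k(y_1,\dots,y_{i+1})\,y_{i+1}=-\phi_{i+1}^k(y_1,\dots,y_{i+1})\,y_1y_2\cdots y_{i+1}.$$
   Context: A symmetric polynomial in variables $y_1,\dots,y_n$ is a polynomial (with real coefficients) invariant under every permutation of the variables. *)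

theory Defs
  imports Complex_Main "HOL-Combinatorics.Permutations"
begin

text \<open>Real polynomial functions in the variables y_1..y_n, where variable y_(m+1)
  is represented by coordinate m of a point y :: nat => real. Over the reals,
  polynomial functions and polynomials correspond bijectively.\<close>
inductive mpoly_fun :: "nat \<Rightarrow> ((nat \<Rightarrow> real) \<Rightarrow> real) \<Rightarrow> bool" for n :: nat where
  const: "mpoly_fun n (\<lambda>y. c)"
| var: "i < n \<Longrightarrow> mpoly_fun n (\<lambda>y. y i)"
| add: "mpoly_fun n f \<Longrightarrow> mpoly_fun n g \<Longrightarrow> mpoly_fun n (\<lambda>y. f y + g y)"
| mult: "mpoly_fun n f \<Longrightarrow> mpoly_fun n g \<Longrightarrow> mpoly_fun n (\<lambda>y. f y * g y)"

definition sym_mpoly :: "nat \<Rightarrow> ((nat \<Rightarrow> real) \<Rightarrow> real) \<Rightarrow> bool" where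
  "sym_mpoly n f \<longleftrightarrow> mpoly_fun n f \<and>
     (\<forall>\<sigma>. \<sigma> permutes {..<n} \<longrightarrow> (\<forall>y. f (y \<circ> \<sigma>) = f y))"

end

theory Submission
  imports Defs
begin

definition SS :: "nat \<Rightarrow> nat \<Rightarrow> (nat \<Rightarrow> nat) set" where
  "SS n m = {a. (\<forall>j. n \<le> j \<longrightarrow> a j = 0) \<and> sum a {..<n} = m}"

definition QQ :: "nat \<Rightarrow> nat \<Rightarrow> (nat \<Rightarrow> real) \<Rightarrow> real" where
  "QQ n m y = (\<Sum>a\<in>SS n m. \<Prod>j<n. y j ^ (m - a j))"

lemma SS_le: "a \<in> SS n m \<Longrightarrow> a j \<le> m"
  unfolding SS_def
  by (cases "j < n") (auto intro!: member_le_sum[of _ "{..<n}" a, simplified])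

lemma SS_finite: "finite (SS n m)"
proof -
  let ?h = "\<lambda>f j. if j < n then f j else (0::nat)"
  have "SS n m \<subseteq> ?h ` ({..<n} \<rightarrow>\<^sub>E {..m})"
  proof
    fix a assume a: "a \<in> SS n m"
    have e: "a = ?h (restrict a {..<n})"
    proof
      fix j show "a j = ?h (restrict a {..<n}) j" using a unfolding SS_def by simp
    qed
    have "restrict a {..<n} \<in> {..<n} \<rightarrow>\<^sub>E {..m}"
      using SS_le[OF a] by simp
    then show "a \<in> ?h ` ({..<n} \<rightarrow>\<^sub>E {..m})" using e by blast
  qed
  moreover have "finite ({..<n} \<rightarrow>\<^sub>E {..m::nat})" by (simp add: finite_PiE)
  ultimately show ?thesis using finite_subset by blast
qed

lemma mpoly_pow: "mpoly_fun n f \<Longrightarrow> mpoly_fun n (\<lambda>y. f y ^ k)"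
proof (induction k)
  case 0 then show ?case using mpoly_fun.const[of n 1] by simp
next
  case (Suc k) then show ?case using mpoly_fun.mult[OF Suc(2) Suc.IH] by simp
qed

lemma mpoly_sum: "finite A \<Longrightarrow> (\<forall>a\<in>A. mpoly_fun n (f a)) \<Longrightarrow> mpoly_fun n (\<lambda>y. \<Sum>a\<in>A. f a y)"
proof (induction A rule: finite_induct)
  case empty then show ?case using mpoly_fun.const[of n 0] by simp
next
  case (insert x F) then show ?case using mpoly_fun.add[of n "f x" "\<lambda>y. \<Sum>a\<in>F. f a y"] by simp
qed

lemma mpoly_prod: "finite A \<Longrightarrow> (\<forall>a\<in>A. mpoly_fun n (f a)) \<Longrightarrow> mpoly_fun n (\<lambda>y. \<Prod>a\<in>A. f a y)"
proof (induction A rule: finite_induct)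
  case empty then show ?case using mpoly_fun.const[of n 1] by simp
next
  case (insert x F) then show ?case using mpoly_fun.mult[of n "f x" "\<lambda>y. \<Prod>a\<in>F. f a y"] by simp
qed

lemma QQ_poly: "mpoly_fun n (QQ n m)"
proof -
  have "mpoly_fun n (\<lambda>y. \<Sum>a\<in>SS n m. \<Prod>j<n. y j ^ (m - a j))"
    by (intro mpoly_sum mpoly_prod ballI mpoly_pow mpoly_fun.var SS_finite) auto
  then show ?thesis unfolding QQ_def[abs_def] .
qed

lemma QQ_sym:
  assumes p: "\<sigma> permutes {..<n}"
  shows "QQ n m (y \<circ> \<sigma>) = QQ n m y"
proof -
  have ip: "inv \<sigma> permutes {..<n}" using p by (rule permutes_inv)
  have "QQ n m (y \<circ> \<sigma>) = (\<Sum>a\<in>SS n m. \<Prod>j<n. y (\<sigma> j) ^ (m - a j))"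
    by (simp add: QQ_def)
  also have "\<dots> = (\<Sum>a\<in>SS n m. \<Prod>j<n. y j ^ (m - (a \<circ> inv \<sigma>) j))"
    using prod.permutes_inv[OF p, of "\<lambda>x s. y x ^ (m - _ s)"] by simp
  also have "\<dots> = (\<Sum>a\<in>SS n m. \<Prod>j<n. y j ^ (m - a j))"
  proof (rule sum.reindex_bij_betw[of "\<lambda>a. a \<circ> inv \<sigma>" "SS n m" "SS n m" "\<lambda>a. \<Prod>j<n. y j ^ (m - a j)"])
    show "bij_betw (\<lambda>a. a \<circ> inv \<sigma>) (SS n m) (SS n m)"
    proof (rule bij_betw_byWitness[where f'="\<lambda>a. a \<circ> \<sigma>"])
      show "\<forall>a\<in>SS n m. a \<circ> inv \<sigma> \<circ> \<sigma> = a"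
        using permutes_inv_o(2)[OF p] by (simp add: o_assoc[symmetric])
      show "\<forall>a\<in>SS n m. a \<circ> \<sigma> \<circ> inv \<sigma> = a"
        using permutes_inv_o(1)[OF p] by (simp add: o_assoc[symmetric])
      show "(\<lambda>a. a \<circ> inv \<sigma>) ` SS n m \<subseteq> SS n m"
      proof safe
        fix a assume a: "a \<in> SS n m"
        have "sum (a \<circ> inv \<sigma>) {..<n} = sum a {..<n}"
          using sum.permute[OF ip, of a] by simp
        moreover have "\<And>j. n \<le> j \<Longrightarrow> inv \<sigma> j = j" using permutes_not_in[OF ip] by auto
        ultimately show "a \<circ> inv \<sigma> \<in> SS n m" using a by (auto simp: SS_def)
      qed
      show "(\<lambda>a. a \<circ> \<sigma>) ` SS n m \<subseteq> SS n m"
      proof safe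
        fix a assume a: "a \<in> SS n m"
        have "sum (a \<circ> \<sigma>) {..<n} = sum a {..<n}"
          using sum.permute[OF p, of a] by simp
        moreover have "\<And>j. n \<le> j \<Longrightarrow> \<sigma> j = j" using permutes_not_in[OF p] by auto
        ultimately show "a \<circ> \<sigma> \<in> SS n m" using a by (auto simp: SS_def)
      qed
    qed
  qed
  also have "\<dots> = QQ n m y" by (simp add: QQ_def)
  finally show ?thesis .
qed

lemma QQ_sym_mpoly: "sym_mpoly n (QQ n m)"
  unfolding sym_mpoly_def using QQ_poly QQ_sym by blast

lemma SS_zero: "SS n 0 = {\<lambda>_. 0}"
  by (auto simp: SS_def fun_eq_iff) (metis lessThan_iff not_le)

lemma QQ_zero: "QQ n 0 y = 1"
  by (simp add: QQ_def SS_zero)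

lemma SS_one: "SS (Suc 0) m = {\<lambda>j. if j = 0 then m else 0}"
  by (auto simp: SS_def fun_eq_iff)

lemma QQ_one': "QQ (Suc 0) m y = 1"
  unfolding QQ_def SS_one by simp

lemma QQ_one: "QQ 1 m y = 1"
  using QQ_one' by simp

lemma QQ_rec: "QQ (Suc n) (Suc m) y = QQ n (Suc m) y * y n ^ Suc m + QQ (Suc n) m y * (\<Prod>j<n. y j)"
proof -
  define F where "F = (\<lambda>a. \<Prod>j<Suc n. y j ^ (Suc m - a j))"
  define A where "A = {a\<in>SS (Suc n) (Suc m). a n = 0}"
  define B where "B = {a\<in>SS (Suc n) (Suc m). a n \<noteq> 0}"
  have AB: "SS (Suc n) (Suc m) = A \<union> B" "A \<inter> B = {}" by (auto simp: A_def B_def)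
  have fA: "finite A" "finite B" using SS_finite AB by (metis finite_Un)+
  have "QQ (Suc n) (Suc m) y = sum F A + sum F B"
    unfolding QQ_def F_def AB(1) by (rule sum.union_disjoint[OF fA AB(2)])
  moreover have "A = SS n (Suc m)"
    unfolding A_def SS_def by (auto simp: le_Suc_eq) (metis le_antisym not_less_eq_eq)
  moreover have "\<And>a. a \<in> SS n (Suc m) \<Longrightarrow> F a = (\<Prod>j<n. y j ^ (Suc m - a j)) * y n ^ Suc m"
    unfolding F_def SS_def by simp
  ultimately have 1: "sum F A = QQ n (Suc m) y * y n ^ Suc m"
    by (simp add: QQ_def sum_distrib_right)
  let ?g = "\<lambda>b::nat\<Rightarrow>nat. b(n := Suc (b n))"
  have inj: "inj_on ?g (SS (Suc n) m)"
  proof (rule inj_onI)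
    fix a b assume "?g a = ?g b"
    then have "a n = b n" "\<And>j. j \<noteq> n \<Longrightarrow> a j = b j"
      by (metis fun_upd_same nat.inject, metis fun_upd_other)
    then show "a = b" by (metis ext)
  qed
  have Bim: "B = ?g ` SS (Suc n) m"
  proof
    show "B \<subseteq> ?g ` SS (Suc n) m"
    proof
      fix a assume a: "a \<in> B"
      define b where "b = a(n := a n - 1)"
      have "a = ?g b" using a by (auto simp: b_def B_def fun_eq_iff)
      moreover have "b \<in> SS (Suc n) m"
      proof -
        have "sum b {..<n} = sum a {..<n}" unfolding b_def by (intro sum.cong) auto
        then show ?thesis using a by (auto simp: B_def SS_def b_def)
      qed
      ultimately show "a \<in> ?g ` SS (Suc n) m" by blast
    qed
  next
    show "?g ` SS (Suc n) m \<subseteq> B"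
    proof safe
      fix b assume b: "b \<in> SS (Suc n) m"
      have "sum (?g b) {..<n} = sum b {..<n}" by (intro sum.cong) auto
      then show "?g b \<in> B" using b by (auto simp: B_def SS_def)
    qed
  qed
  have "sum F B = sum (F \<circ> ?g) (SS (Suc n) m)"
    unfolding Bim by (rule sum.reindex[OF inj])
  also have "\<dots> = (\<Sum>b\<in>SS (Suc n) m. (\<Prod>j<Suc n. y j ^ (m - b j)) * (\<Prod>j<n. y j))"
  proof (rule sum.cong[OF refl])
    fix b assume b: "b \<in> SS (Suc n) m"
    have le: "\<And>j. b j \<le> m" using SS_le[OF b] .
    have "(F \<circ> ?g) b = (\<Prod>j<n. y j ^ (Suc m - b j)) * y n ^ (m - b n)"
      unfolding F_def by simp
    also have "(\<Prod>j<n. y j ^ (Suc m - b j)) = (\<Prod>j<n. y j ^ (m - b j) * y j)"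
      by (intro prod.cong refl) (simp add: Suc_diff_le[OF le] mult.commute)
    also have "\<dots> = (\<Prod>j<n. y j ^ (m - b j)) * (\<Prod>j<n. y j)"
      by (rule prod.distrib)
    finally have "(F \<circ> ?g) b = (\<Prod>j<n. y j ^ (m - b j)) * (\<Prod>j<n. y j) * y n ^ (m - b n)" .
    then show "(F \<circ> ?g) b = (\<Prod>j<Suc n. y j ^ (m - b j)) * (\<Prod>j<n. y j)"
      by (simp only: prod.lessThan_Suc mult_ac)
  qed
  also have "\<dots> = QQ (Suc n) m y * (\<Prod>j<n. y j)"
    by (simp add: QQ_def sum_distrib_right)
  finally show ?thesis using 1 \<open>QQ (Suc n) (Suc m) y = sum F A + sum F B\<close> by simp
qed

lemma QQ_two: "QQ 2 k y = (\<Sum>i=0..k. y 0 ^ i * y 1 ^ (k - i))"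
proof (induction k)
  case 0 then show ?case by (simp add: QQ_zero)
next
  case (Suc k)
  have "QQ 2 (Suc k) y = y 1 ^ Suc k + QQ 2 k y * y 0"
    using QQ_rec[of 1 k y] by (simp add: QQ_one' numeral_2_eq_2)
  also have "\<dots> = (\<Sum>i=0..Suc k. y 0 ^ i * y 1 ^ (Suc k - i))"
    unfolding Suc.IH atLeast0AtMost sum.atMost_Suc_shift
    by (simp add: sum_distrib_left sum_distrib_right mult.commute mult.left_commute mult.assoc)
  finally show ?case .
qed

theorem mainTheorem18:
  fixes k :: nat
  shows "\<exists>(\<phi> :: nat \<Rightarrow> (nat \<Rightarrow> real) \<Rightarrow> real) (\<psi> :: nat \<Rightarrow> (nat \<Rightarrow> real) \<Rightarrow> real).
     (\<forall>i\<in>{1..k+2}. sym_mpoly i (\<phi> i)) \<and>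
     (\<forall>j\<in>{2..k+2}. sym_mpoly j (\<psi> j)) \<and>
     \<phi> 1 = (\<lambda>y. 1) \<and> \<phi> (k+1) = (\<lambda>y. 1) \<and> \<phi> (k+2) = (\<lambda>y. 0) \<and>
     \<psi> 2 = (\<lambda>y. \<Sum>i=0..k. y 0 ^ i * y 1 ^ (k - i)) \<and> \<psi> (k+2) = (\<lambda>y. 1) \<and>
     (\<forall>i\<in>{1..k+1}. \<forall>y.
        \<phi> i y * y i ^ (k + 2 - i) - \<psi> (i+1) y * y i = - \<phi> (i+1) y * (\<Prod>j<i+1. y j))"
proof -
  define \<phi> where "\<phi> = (\<lambda>i. if i \<le> k + 1 then QQ i (k + 1 - i) else (\<lambda>y. 0))"
  define \<psi> where "\<psi> = (\<lambda>j. QQ j (k + 2 - j))"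
  have s0: "sym_mpoly i (\<lambda>y. 0)" for i
    unfolding sym_mpoly_def using mpoly_fun.const[of i 0] by simp
  have rel: "\<phi> i y * y i ^ (k + 2 - i) - \<psi> (i+1) y * y i = - \<phi> (i+1) y * (\<Prod>j<i+1. y j)"
    if i: "i \<in> {1..k+1}" for i y
  proof (cases "i = k + 1")
    case True then show ?thesis by (simp add: \<phi>_def \<psi>_def QQ_zero)
  next
    case False
    then obtain m where m: "k + 1 - i = Suc m" "k - i = m" "k + 2 - (i+1) = Suc m" "k+2-i = Suc (Suc m)"
      using i by (intro that[of "k - i"]) auto
    have "\<phi> i = QQ i (Suc m)" "\<phi> (i+1) = QQ (Suc i) m" "\<psi> (i+1) = QQ (Suc i) (Suc m)"
      using i False m by (auto simp: \<phi>_def \<psi>_def)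
    then show ?thesis unfolding m(4) using QQ_rec[of i m y]
      by (simp add: algebra_simps)
  qed
  show ?thesis
    apply (rule exI[of _ \<phi>], rule exI[of _ \<psi>])
    apply (intro conjI ballI allI)
    subgoal for i by (auto simp: \<phi>_def QQ_sym_mpoly s0)
    subgoal for j by (simp add: \<psi>_def QQ_sym_mpoly)
    subgoal by (auto simp: \<phi>_def QQ_one' fun_eq_iff)
    subgoal by (auto simp: \<phi>_def QQ_zero fun_eq_iff)
    subgoal by (auto simp: \<phi>_def)
    subgoal by (auto simp: \<psi>_def QQ_two fun_eq_iff)
    subgoal by (auto simp: \<psi>_def QQ_zero fun_eq_iff)
    subgoal for i y by (rule rel)
    done
qed

end
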